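(* Let $d\ge1$, $\kappa>0$, $\rho>0$, and let $x$ be a random vector in $\mathbb{R}^d$ such that $\mathbb{P}(\|x\|>u)\le2e^{-u^2/(2\kappa^2)}$ for all $u\in\mathbb{R}$ and $\Sigma:=\mathbb{E}[(x-\mathbb{E}x)(x-\mathbb{E}x)^T]\succeq\rho I$. Let $\delta\in(0,\frac12)$ and let $\mathcal G$ be an event with $\mathbb{P}(\mathcal G)\le\delta$, with complement $\mathcal G^c$. Then $$\tilde\Sigma:=\mathbb{E}\Big[\big(x-\mathbb{E}[x\mid\mathcal G^c]\big)\big(x-\mathbb{E}[x\mid\mathcal G^c]\big)^T\,\Big|\,\mathcal G^c\Big]\succeq\big(\rho-105\kappa^2\sqrt\delta\big)I.$$
   Context: $A\succeq B$ means $A-B$ is positive semidefinite; $I$ is the $d\times d$ identity matrix. *)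

theory Defs
  imports "HOL-Probability.Probability"
begin

definition psd_ge :: "real^'n^'n \<Rightarrow> real^'n^'n \<Rightarrow> bool" where
  "psd_ge A B \<longleftrightarrow> (\<forall>v::real^'n. 0 \<le> v \<bullet> ((A - B) *v v))"

definition mean_vec :: "'a measure \<Rightarrow> ('a \<Rightarrow> real^'n) \<Rightarrow> real^'n" where
  "mean_vec M x = (\<chi> i. \<integral>\<omega>. x \<omega> $ i \<partial>M)"

definition cov_mat :: "'a measure \<Rightarrow> ('a \<Rightarrow> real^'n) \<Rightarrow> real^'n^'n" where
  "cov_mat M x = (let m = mean_vec M x in
     \<chi> i j. \<integral>\<omega>. (x \<omega> $ i - m $ i) * (x \<omega> $ j - m $ j) \<partial>M)"

definition cond_mean_vec :: "'a measure \<Rightarrow> 'a set \<Rightarrow> ('a \<Rightarrow> real^'n) \<Rightarrow> real^'n" where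
  "cond_mean_vec M A x = (\<chi> i. (\<integral>\<omega>. indicator A \<omega> * x \<omega> $ i \<partial>M) / measure M A)"

definition cond_cov_mat :: "'a measure \<Rightarrow> 'a set \<Rightarrow> ('a \<Rightarrow> real^'n) \<Rightarrow> real^'n^'n" where
  "cond_cov_mat M A x = (let m = cond_mean_vec M A x in
     \<chi> i j. (\<integral>\<omega>. indicator A \<omega> * ((x \<omega> $ i - m $ i) * (x \<omega> $ j - m $ j)) \<partial>M) / measure M A)"

end

theory Submission
  imports Defs
begin


lemma exp_nat_ge: "(9/4::real)^k \<le> exp (real k)"
proof -
  have "exp (1/2::real) \<ge> 3/2" using exp_ge_add_one_self[of "1/2::real"] by simp
  hence "(3/2::real)^(2*k) \<le> exp (1/2) ^ (2*k)" by (intro power_mono) auto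
  also have "\<dots> = exp (real k)" by (simp add: exp_of_nat_mult[symmetric])
  finally have "(3/2::real)^(2*k) \<le> exp (real k)" .
  moreover have "(3/2::real)^(2*k) = ((3/2)^2)^k" by (rule power_mult)
  moreover have "(3/2::real)^2 = 9/4" by (simp add: power2_eq_square)
  ultimately show ?thesis by simp
qed

lemma lin_le_pow: "2 * real k + 1 \<le> 3 * (3/2::real)^k"
proof (induction k)
  case 0 then show ?case by simp
next
  case (Suc k)
  show ?case
  proof (cases "k = 0")
    case True then show ?thesis by simp
  next
    case False
    show ?thesis
    proof (cases "k = 1")
      case True then show ?thesis by simp
    next
    case False
    hence "k \<ge> 2" using \<open>k \<noteq> 0\<close> by simp
    have "3 * (3/2::real)^(Suc k) = 3/2 * (3 * (3/2)^k)" by simp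
    also have "\<dots> \<ge> 3/2 * (2 * real k + 1)" using Suc by simp
    finally show ?thesis using \<open>k \<ge> 2\<close> by simp
  qed
  qed
qed

lemma term_bound: "(2 * real k + 1) * (2 * exp (- real k)) \<le> 6 * (2/3::real)^k"
proof -
  have e: "exp (- real k) = 1 / exp (real k)" by (simp add: exp_minus field_simps)
  have "(2 * real k + 1) * exp (- real k) \<le> 3 * (3/2::real)^k / (9/4)^k"
  proof -
    have "(2 * real k + 1) * exp (- real k) = (2 * real k + 1) / exp (real k)" unfolding e by simp
    also have "\<dots> \<le> 3 * (3/2::real)^k / exp (real k)"
      by (rule divide_right_mono[OF lin_le_pow]) simp
    also have "\<dots> \<le> 3 * (3/2::real)^k / (9/4)^k"
      by (rule divide_left_mono[OF exp_nat_ge]) auto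
    finally show ?thesis .
  qed
  also have "\<dots> = 3 * (2/3)^k"
  proof -
    have "(3/2::real)^k/(9/4)^k = ((3/2)/(9/4))^k" by (metis power_divide)
    moreover have "(3/2::real)/(9/4) = 2/3" by simp
    ultimately show ?thesis by simp
  qed
  finally show ?thesis by (simp add: mult.commute)
qed

lemma sum_geom_18: "(\<Sum>k. 6 * (2/3::real)^k) = 18"
  using suminf_geometric[of "2/3::real"] by (simp add: suminf_mult)




lemma sum_odd: "(\<Sum>k<N. 2 * real k + 1) = real N ^ 2"
  by (induction N) (auto simp: power2_eq_square algebra_simps)

lemma ceil_sq:
  fixes w :: real assumes "w \<ge> 0"
  shows "ennreal (w^2) \<le> (\<Sum>k. ennreal (2 * real k + 1) * (if real k < w then 1 else 0))"
proof -
  define N where "N = nat \<lceil>w\<rceil>"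
  have wN: "w \<le> real N" unfolding N_def using assms by linarith
  have kw: "real k < w" if "k < N" for k using that unfolding N_def by linarith
  have "w^2 \<le> real N ^ 2" using wN assms by (intro power_mono) auto
  hence "ennreal (w^2) \<le> ennreal (\<Sum>k<N. 2 * real k + 1)" by (simp add: sum_odd)
  also have "\<dots> = (\<Sum>k<N. ennreal (2 * real k + 1))" by (rule sum_ennreal[symmetric]) simp
  also have "\<dots> = (\<Sum>k<N. ennreal (2 * real k + 1) * (if real k < w then 1 else 0))"
    by (rule sum.cong) (auto simp: kw)
  also have "\<dots> \<le> (\<Sum>k. ennreal (2 * real k + 1) * (if real k < w then 1 else 0))"
    by (rule sum_le_suminf) (auto intro: summableI)
  finally show ?thesis .
qed

lemma fourth_moment:
  fixes f :: "'a \<Rightarrow> real" and \<kappa> :: real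
  assumes P: "prob_space M" and fm: "f \<in> borel_measurable M" and f0: "\<And>\<omega>. f \<omega> \<ge> 0"
    and k0: "\<kappa> > 0"
    and tail: "\<forall>u::real. measure M {\<omega> \<in> space M. f \<omega> > u} \<le> 2 * exp (- u\<^sup>2 / (2 * \<kappa>\<^sup>2))"
  shows "integrable M (\<lambda>\<omega>. f \<omega> ^ 4) \<and> (\<integral>\<omega>. f \<omega> ^ 4 \<partial>M) \<le> 72 * \<kappa>^4"
proof -
  interpret prob_space M by (rule P)
  define w where "w \<omega> = f \<omega> ^ 2 / (2 * \<kappa>^2)" for \<omega>
  have w0: "w \<omega> \<ge> 0" for \<omega> unfolding w_def by simp
  have wm: "w \<in> borel_measurable M" unfolding w_def using fm by measurable
  define S where "S k = {\<omega> \<in> space M. real k < w \<omega>}" for k :: nat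
  have Ss: "S k \<in> sets M" for k unfolding S_def using wm by measurable
  have Seq: "S k = {\<omega> \<in> space M. f \<omega> > sqrt (2 * real k) * \<kappa>}" for k
  proof -
    have "real k < w \<omega> \<longleftrightarrow> f \<omega> > sqrt (2 * real k) * \<kappa>" for \<omega>
    proof -
      have "real k < w \<omega> \<longleftrightarrow> 2 * real k * \<kappa>^2 < f \<omega> ^ 2"
        unfolding w_def using k0 by (simp add: field_simps)
      also have "\<dots> \<longleftrightarrow> sqrt (2 * real k * \<kappa>^2) < sqrt (f \<omega> ^ 2)" by (simp only: real_sqrt_less_iff)
      also have "\<dots> \<longleftrightarrow> sqrt (2 * real k) * \<kappa> < f \<omega>"
        using k0 f0[of \<omega>] by (simp add: real_sqrt_mult)
      finally show ?thesis .
    qed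
    thus ?thesis unfolding S_def by auto
  qed
  have Sb: "emeasure M (S k) \<le> ennreal (2 * exp (- real k))" for k
  proof -
    have "measure M (S k) \<le> 2 * exp (- (sqrt (2 * real k) * \<kappa>)\<^sup>2 / (2 * \<kappa>\<^sup>2))"
      unfolding Seq using tail by blast
    also have "- (sqrt (2 * real k) * \<kappa>)\<^sup>2 / (2 * \<kappa>\<^sup>2) = - real k"
      using k0 by (simp add: power_mult_distrib)
    finally show ?thesis by (simp add: emeasure_eq_measure)
  qed
  have pw: "ennreal (w \<omega> ^ 2) \<le> (\<Sum>k. ennreal (2 * real k + 1) * indicator (S k) \<omega>)"
    if "\<omega> \<in> space M" for \<omega>
    using ceil_sq[OF w0[of \<omega>]] that unfolding S_def indicator_def by (simp add: of_bool_def)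
  have "(\<integral>\<^sup>+\<omega>. ennreal (w \<omega> ^ 2) \<partial>M) \<le> (\<integral>\<^sup>+\<omega>. (\<Sum>k. ennreal (2 * real k + 1) * indicator (S k) \<omega>) \<partial>M)"
    by (rule nn_integral_mono) (rule pw)
  also have "\<dots> = (\<Sum>k. \<integral>\<^sup>+\<omega>. ennreal (2 * real k + 1) * indicator (S k) \<omega> \<partial>M)"
    by (rule nn_integral_suminf) (use Ss in measurable)
  also have "\<dots> = (\<Sum>k. ennreal (2 * real k + 1) * emeasure M (S k))"
    using Ss by (simp add: nn_integral_cmult_indicator)
  also have "\<dots> \<le> (\<Sum>k. ennreal (6 * (2/3) ^ k))"
  proof (rule suminf_le)
    fix k
    have "ennreal (2 * real k + 1) * emeasure M (S k) \<le> ennreal (2 * real k + 1) * ennreal (2 * exp (- real k))"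
      by (rule mult_left_mono[OF Sb]) simp
    also have "\<dots> = ennreal ((2 * real k + 1) * (2 * exp (- real k)))"
      by (simp add: ennreal_mult)
    also have "\<dots> \<le> ennreal (6 * (2/3) ^ k)"
      by (rule ennreal_leI[OF term_bound])
    finally show "ennreal (2 * real k + 1) * emeasure M (S k) \<le> ennreal (6 * (2/3) ^ k)" .
  qed auto
  also have "\<dots> = ennreal 18"
    using sum_geom_18 by (subst suminf_ennreal2) auto
  finally have nn: "(\<integral>\<^sup>+\<omega>. ennreal (w \<omega> ^ 2) \<partial>M) \<le> ennreal 18" .
  have iw: "integrable M (\<lambda>\<omega>. w \<omega> ^ 2)"
  proof (rule integrableI_nonneg)
    show "(\<lambda>\<omega>. w \<omega> ^ 2) \<in> borel_measurable M" using wm by measurable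
    show "(\<integral>\<^sup>+\<omega>. ennreal (w \<omega> ^ 2) \<partial>M) < \<infinity>" using le_less_trans[OF nn ennreal_less_top] by simp
  qed simp
  have "ennreal (\<integral>\<omega>. w \<omega> ^ 2 \<partial>M) = (\<integral>\<^sup>+\<omega>. ennreal (w \<omega> ^ 2) \<partial>M)"
    by (rule nn_integral_eq_integral[OF iw, symmetric]) simp
  with nn have "ennreal (\<integral>\<omega>. w \<omega> ^ 2 \<partial>M) \<le> ennreal 18" by simp
  hence I18: "(\<integral>\<omega>. w \<omega> ^ 2 \<partial>M) \<le> 18" by (subst (asm) ennreal_le_iff) auto
  have feq: "f \<omega> ^ 4 = (4 * \<kappa>^4) * w \<omega> ^ 2" for \<omega>
    unfolding w_def using k0 by (simp add: field_simps power2_eq_square eval_nat_numeral)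
  have "integrable M (\<lambda>\<omega>. (4 * \<kappa>^4) * w \<omega> ^ 2)" using iw by simp
  hence i4: "integrable M (\<lambda>\<omega>. f \<omega> ^ 4)" by (simp only: feq)
  have "(\<integral>\<omega>. f \<omega> ^ 4 \<partial>M) = (4 * \<kappa>^4) * (\<integral>\<omega>. w \<omega> ^ 2 \<partial>M)"
    by (simp only: feq integral_mult_right_zero)
  also have "\<dots> \<le> (4 * \<kappa>^4) * 18" using I18 k0 by (intro mult_left_mono) auto
  finally show ?thesis using i4 by simp
qed


lemma scalar:
  fixes y :: "'a \<Rightarrow> real" and A :: "'a set"
  assumes P: "prob_space M" and As: "A \<in> sets M"
    and iy: "integrable M y"
    and iu2: "integrable M (\<lambda>\<omega>. (y \<omega> - (\<integral>\<omega>. y \<omega> \<partial>M))^2)"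
    and iu4: "integrable M (\<lambda>\<omega>. (y \<omega> - (\<integral>\<omega>. y \<omega> \<partial>M))^4)"
    and pq: "1 - measure M A \<le> measure M A" and pd: "1 - measure M A \<le> \<delta>" and d0: "\<delta> > 0"
    and K0: "K > 0" and Kb: "(\<integral>\<omega>. (y \<omega> - (\<integral>\<omega>. y \<omega> \<partial>M))^4 \<partial>M) \<le> K^2"
  shows "(\<integral>\<omega>. indicator A \<omega> * (y \<omega> - (\<integral>\<omega>. indicator A \<omega> * y \<omega> \<partial>M) / measure M A)^2 \<partial>M) / measure M A
           \<ge> (\<integral>\<omega>. (y \<omega> - (\<integral>\<omega>. y \<omega> \<partial>M))^2 \<partial>M) - 2 * K * sqrt \<delta>"
proof -
  interpret prob_space M by (rule P)
  define \<mu> where "\<mu> = (\<integral>\<omega>. y \<omega> \<partial>M)"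
  define p where "p = measure M A"
  define a where "a = (\<integral>\<omega>. indicator A \<omega> * y \<omega> \<partial>M) / p"
  define u where "u \<omega> = y \<omega> - \<mu>" for \<omega>
  define d where "d = a - \<mu>"
  define i where "i \<omega> = (indicator A \<omega> :: real)" for \<omega>
  have p0: "p > 0" using pq unfolding p_def by linarith
  have p1: "p \<le> 1" unfolding p_def by simp
  have i01: "i \<omega> = 0 \<or> i \<omega> = 1" for \<omega> unfolding i_def by (simp add: indicator_def)
  have ile: "0 \<le> i \<omega>" "i \<omega> \<le> 1" for \<omega> unfolding i_def by (auto simp: indicator_def)
  have ii: "integrable M i" unfolding i_def using As by (intro integrable_real_indicator) (auto simp: emeasure_eq_measure)
  have Ii: "(\<integral>\<omega>. i \<omega> \<partial>M) = p" unfolding i_def p_def using As by simp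
  have iu: "integrable M u" unfolding u_def using iy by simp
  have iu2': "integrable M (\<lambda>\<omega>. u \<omega>^2)" unfolding u_def \<mu>_def using iu2 .
  have iu4': "integrable M (\<lambda>\<omega>. u \<omega>^4)" unfolding u_def \<mu>_def using iu4 .
  have Iu: "(\<integral>\<omega>. u \<omega> \<partial>M) = 0" unfolding u_def \<mu>_def using iy by (simp add: prob_space)
  have iiy: "integrable M (\<lambda>\<omega>. i \<omega> * y \<omega>)" unfolding i_def using integrable_mult_indicator[OF As iy] by simp
  have iiu: "integrable M (\<lambda>\<omega>. i \<omega> * u \<omega>)" unfolding i_def using integrable_mult_indicator[OF As iu] by simp
  have iiu2: "integrable M (\<lambda>\<omega>. i \<omega> * u \<omega>^2)" unfolding i_def using integrable_mult_indicator[OF As iu2'] by simp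
  have Iiu: "(\<integral>\<omega>. i \<omega> * u \<omega> \<partial>M) = p * d"
  proof -
    have "(\<integral>\<omega>. i \<omega> * u \<omega> \<partial>M) = (\<integral>\<omega>. i \<omega> * y \<omega> - \<mu> * i \<omega> \<partial>M)"
      unfolding u_def by (simp add: algebra_simps)
    also have "\<dots> = (\<integral>\<omega>. i \<omega> * y \<omega> \<partial>M) - \<mu> * p"
      using iiy ii Ii by simp
    also have "(\<integral>\<omega>. i \<omega> * y \<omega> \<partial>M) = p * a"
      unfolding a_def i_def using p0 by simp
    finally show ?thesis unfolding d_def by (simp add: algebra_simps)
  qed
  define SA where "SA = (\<integral>\<omega>. i \<omega> * u \<omega>^2 \<partial>M)"
  define SG where "SG = (\<integral>\<omega>. (1 - i \<omega>) * u \<omega>^2 \<partial>M)"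
  have LHS: "(\<integral>\<omega>. i \<omega> * (y \<omega> - a)^2 \<partial>M) = SA - p * d^2"
  proof -
    have "(\<integral>\<omega>. i \<omega> * (y \<omega> - a)^2 \<partial>M) = (\<integral>\<omega>. i \<omega> * u \<omega>^2 - 2 * d * (i \<omega> * u \<omega>) + d^2 * i \<omega> \<partial>M)"
      unfolding u_def d_def by (rule Bochner_Integration.integral_cong) (auto simp: power2_eq_square algebra_simps)
    also have "\<dots> = SA - 2 * d * (p * d) + d^2 * p"
      unfolding SA_def using iiu2 iiu ii Iiu Ii by simp
    finally show ?thesis by (simp add: power2_eq_square algebra_simps)
  qed
  have SAG: "SA + SG = (\<integral>\<omega>. u \<omega>^2 \<partial>M)"
  proof -
    have "SG = (\<integral>\<omega>. u \<omega>^2 - i \<omega> * u \<omega>^2 \<partial>M)" unfolding SG_def by (simp add: algebra_simps)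
    also have "\<dots> = (\<integral>\<omega>. u \<omega>^2 \<partial>M) - SA" unfolding SA_def using iu2' iiu2 by simp
    finally show ?thesis by simp
  qed
  have SG1: "SG \<ge> p * d^2"
  proof -
    have "0 \<le> (\<integral>\<omega>. (1 - i \<omega>) * (u \<omega> + d)^2 \<partial>M)"
      by (intro integral_nonneg_AE AE_I2 mult_nonneg_nonneg) (use ile in auto)
    also have "(\<integral>\<omega>. (1 - i \<omega>) * (u \<omega> + d)^2 \<partial>M) =
        (\<integral>\<omega>. (u \<omega>^2 - i \<omega> * u \<omega>^2) + 2 * d * u \<omega> - 2 * d * (i \<omega> * u \<omega>) + d^2 - d^2 * i \<omega> \<partial>M)"
      by (rule Bochner_Integration.integral_cong) (auto simp: power2_eq_square algebra_simps)
    also have "\<dots> = ((\<integral>\<omega>. u \<omega>^2 \<partial>M) - SA) + 2 * d * 0 - 2 * d * (p * d) + d^2 - d^2 * p"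
      unfolding SA_def using iiu2 iiu ii Iiu Ii iu Iu iu2' by (simp add: prob_space)
    finally have f0: "0 \<le> ((\<integral>\<omega>. u \<omega>^2 \<partial>M) - SA) + 2 * d * 0 - 2 * d * (p * d) + d^2 - d^2 * p" .
    have "2 * d * (p * d) = 2 * p * d^2" by (simp add: power2_eq_square)
    with f0 SAG have "0 \<le> SG - 2 * p * d^2 + d^2 - d^2 * p" by linarith
    moreover have "d^2 * (1 - p) \<le> d^2 * p" using pq unfolding p_def by (intro mult_left_mono) auto
    ultimately show ?thesis by (simp add: algebra_simps)
  qed
  have SG2: "SG \<le> K * sqrt \<delta>"
  proof -
    define t where "t = K / sqrt \<delta>"
    have t0: "t > 0" unfolding t_def using K0 d0 by simp
    have pw: "(1 - i \<omega>) * u \<omega>^2 \<le> (t * (1 - i \<omega>) + u \<omega>^4 / t) / 2" for \<omega>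
    proof -
      define b where "b = 1 - i \<omega>"
      have bb: "b^2 = b" unfolding b_def using i01[of \<omega>] by auto
      have "0 \<le> (t * b - u \<omega>^2)^2" by simp
      hence "2 * (t * b) * u \<omega>^2 \<le> (t * b)^2 + (u \<omega>^2)^2" unfolding power2_diff by linarith
      also have "(t * b)^2 = t^2 * b" using bb by (simp add: power_mult_distrib)
      also have "(u \<omega>^2)^2 = u \<omega>^4" by simp
      finally have "2 * t * (b * u \<omega>^2) \<le> t^2 * b + u \<omega>^4" by (simp add: algebra_simps)
      moreover have "(t * b + u \<omega>^4 / t) / 2 = (t^2 * b + u \<omega>^4) / (2 * t)"
        using t0 by (simp add: field_simps power2_eq_square)
      ultimately show ?thesis unfolding b_def[symmetric] using t0
        by (simp add: le_divide_eq algebra_simps)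
    qed
    have "SG \<le> (\<integral>\<omega>. (t * (1 - i \<omega>) + u \<omega>^4 / t) / 2 \<partial>M)"
      unfolding SG_def
      by (rule integral_mono) (use pw iu2' iiu2 ii iu4' in \<open>auto simp: algebra_simps\<close>)
    also have "\<dots> = (t * (1 - p) + (\<integral>\<omega>. u \<omega>^4 \<partial>M) / t) / 2"
      using ii Ii iu4' by (simp add: prob_space algebra_simps)
    also have "\<dots> \<le> (t * \<delta> + K^2 / t) / 2"
      using pd Kb t0 unfolding p_def u_def \<mu>_def
      by (intro divide_right_mono add_mono mult_left_mono divide_right_mono) auto
    also have "\<dots> = K * sqrt \<delta>"
    proof -
      have s: "sqrt \<delta> * sqrt \<delta> = \<delta>" using d0 by simp
      have sq: "sqrt \<delta> > 0" using d0 by simp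
      have g1: "K / r * (r * r) = K * r" if "r > 0" for r using that by (simp add: field_simps)
      have g2: "K^2 / (K / r) = K * r" if "r > 0" for r using that K0 by (simp add: field_simps power2_eq_square)
      have 1: "t * \<delta> = K * sqrt \<delta>" unfolding t_def using g1[OF sq] s by simp
      have 2: "K^2 / t = K * sqrt \<delta>" unfolding t_def using g2[OF sq] by simp
      show ?thesis using 1 2 by simp
    qed
    finally show ?thesis .
  qed
  have "(\<integral>\<omega>. i \<omega> * (y \<omega> - a)^2 \<partial>M) \<ge> 0"
    by (intro integral_nonneg_AE AE_I2 mult_nonneg_nonneg) (use ile in auto)
  hence "(\<integral>\<omega>. i \<omega> * (y \<omega> - a)^2 \<partial>M) / p \<ge> (\<integral>\<omega>. i \<omega> * (y \<omega> - a)^2 \<partial>M)"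
    using p0 p1 by (simp add: le_divide_eq mult_left_le)
  moreover have "(\<integral>\<omega>. i \<omega> * (y \<omega> - a)^2 \<partial>M) \<ge> (\<integral>\<omega>. u \<omega>^2 \<partial>M) - 2 * K * sqrt \<delta>"
    using LHS SAG SG1 SG2 by linarith
  ultimately show ?thesis unfolding i_def a_def p_def u_def \<mu>_def by linarith
qed


lemma quad:
  fixes x :: "'a \<Rightarrow> real^'n" and h :: "'a \<Rightarrow> real" and m v :: "real^'n" and p :: real
  assumes int: "\<And>i j. integrable M (\<lambda>\<omega>. h \<omega> * ((x \<omega> $ i - m $ i) * (x \<omega> $ j - m $ j)))"
  shows "v \<bullet> ((\<chi> i j. (\<integral>\<omega>. h \<omega> * ((x \<omega> $ i - m $ i) * (x \<omega> $ j - m $ j)) \<partial>M) / p) *v v)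
         = (\<integral>\<omega>. h \<omega> * (v \<bullet> (x \<omega> - m))^2 \<partial>M) / p"
proof -
  have sq: "h \<omega> * (v \<bullet> (x \<omega> - m))^2 = (\<Sum>i\<in>UNIV. \<Sum>j\<in>UNIV. v $ i * v $ j * (h \<omega> * ((x \<omega> $ i - m $ i) * (x \<omega> $ j - m $ j))))" for \<omega>
  proof -
    have "(v \<bullet> (x \<omega> - m))^2 = (\<Sum>i\<in>UNIV. v $ i * (x \<omega> $ i - m $ i)) * (\<Sum>j\<in>UNIV. v $ j * (x \<omega> $ j - m $ j))"
      by (simp add: inner_vec_def power2_eq_square)
    also have "\<dots> = (\<Sum>i\<in>UNIV. \<Sum>j\<in>UNIV. (v $ i * (x \<omega> $ i - m $ i)) * (v $ j * (x \<omega> $ j - m $ j)))"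
      by (rule sum_product)
    finally show ?thesis by (simp add: sum_distrib_left algebra_simps)
  qed
  have "(\<integral>\<omega>. h \<omega> * (v \<bullet> (x \<omega> - m))^2 \<partial>M) = (\<Sum>i\<in>UNIV. \<Sum>j\<in>UNIV. v $ i * v $ j * (\<integral>\<omega>. h \<omega> * ((x \<omega> $ i - m $ i) * (x \<omega> $ j - m $ j)) \<partial>M))"
    unfolding sq using int by (simp add: integral_sum)
  moreover have "v \<bullet> ((\<chi> i j. (\<integral>\<omega>. h \<omega> * ((x \<omega> $ i - m $ i) * (x \<omega> $ j - m $ j)) \<partial>M) / p) *v v)
     = (\<Sum>i\<in>UNIV. \<Sum>j\<in>UNIV. v $ i * v $ j * (\<integral>\<omega>. h \<omega> * ((x \<omega> $ i - m $ i) * (x \<omega> $ j - m $ j)) \<partial>M)) / p"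
    by (simp add: inner_vec_def matrix_vector_mult_def sum_distrib_left sum_divide_distrib algebra_simps)
  ultimately show ?thesis by simp
qed

lemma pow4_bound:
  fixes z N \<alpha> \<beta> :: real
  assumes "0 \<le> N" "0 \<le> \<alpha>" "0 \<le> \<beta>" "\<bar>z\<bar> \<le> \<alpha> * N + \<beta>"
  shows "z^4 \<le> 8 * (\<alpha>^4 + \<beta>^4) * (1 + N^4)" "z^2 \<le> (1 + 8 * (\<alpha>^4 + \<beta>^4)) * (1 + N^4)"
proof -
  have c4: "(a + b)^4 \<le> 8 * (a^4 + b^4)" for a b :: real
  proof -
    have "(a + b)^2 \<le> 2 * (a^2 + b^2)" using zero_le_power2[of "a - b"] unfolding power2_diff power2_sum by (simp add: algebra_simps)
    hence "((a + b)^2)^2 \<le> (2 * (a^2 + b^2))^2" by (intro power_mono) auto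
    also have "\<dots> \<le> 8 * (a^4 + b^4)" using zero_le_power2[of "a^2 - b^2"]
      unfolding power2_diff by (simp add: power2_eq_square algebra_simps eval_nat_numeral)
    finally show ?thesis by (simp add: eval_nat_numeral)
  qed
  have "z^4 = \<bar>z\<bar>^4" by (simp add: power_abs[symmetric] eval_nat_numeral)
  also have "\<dots> \<le> (\<alpha> * N + \<beta>)^4" using assms by (intro power_mono) auto
  also have "\<dots> \<le> 8 * ((\<alpha> * N)^4 + \<beta>^4)" by (rule c4)
  also have "\<dots> = 8 * (\<alpha>^4 * N^4 + \<beta>^4)" by (simp add: power_mult_distrib)
  also have "\<dots> \<le> 8 * (\<alpha>^4 + \<beta>^4) * (1 + N^4)"
    using assms by (simp add: algebra_simps)
  finally show z4: "z^4 \<le> 8 * (\<alpha>^4 + \<beta>^4) * (1 + N^4)" .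
  have "z^2 \<le> 1 + z^4" using zero_le_power2[of "z^2 - 1/2"]
    unfolding power2_diff by (simp add: power2_eq_square eval_nat_numeral algebra_simps)
  also have "\<dots> \<le> 1 + 8 * (\<alpha>^4 + \<beta>^4) * (1 + N^4)" using z4 by simp
  also have "\<dots> \<le> (1 + 8 * (\<alpha>^4 + \<beta>^4)) * (1 + N^4)" using assms by (simp add: algebra_simps)
  finally show "z^2 \<le> (1 + 8 * (\<alpha>^4 + \<beta>^4)) * (1 + N^4)" .
qed

lemma int_dom:
  fixes g N :: "'a \<Rightarrow> real"
  assumes "integrable M (\<lambda>\<omega>. N \<omega> ^ 4)" "finite_measure M" "g \<in> borel_measurable M"
    "\<And>\<omega>. \<omega> \<in> space M \<Longrightarrow> \<bar>g \<omega>\<bar> \<le> C * (1 + N \<omega> ^ 4)"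
  shows "integrable M g"
proof (rule Bochner_Integration.integrable_bound[of M "\<lambda>\<omega>. C * (1 + N \<omega> ^ 4)"])
  interpret finite_measure M by fact
  show "integrable M (\<lambda>\<omega>. C * (1 + N \<omega> ^ 4))" using assms(1) by simp
  show "g \<in> borel_measurable M" by fact
  show "AE \<omega> in M. norm (g \<omega>) \<le> norm (C * (1 + N \<omega> ^ 4))"
    by (rule AE_I2) (use assms(4) in \<open>force\<close>)
qed

lemma jensen_sq:
  fixes f :: "'a \<Rightarrow> real"
  assumes "prob_space M" "integrable M f" "integrable M (\<lambda>\<omega>. f \<omega>^2)"
  shows "(\<integral>\<omega>. f \<omega> \<partial>M)^2 \<le> (\<integral>\<omega>. f \<omega>^2 \<partial>M)"
proof -
  interpret prob_space M by fact
  define c where "c = (\<integral>\<omega>. f \<omega> \<partial>M)"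
  have "0 \<le> (\<integral>\<omega>. (f \<omega> - c)^2 \<partial>M)" by simp
  also have "(\<integral>\<omega>. (f \<omega> - c)^2 \<partial>M) = (\<integral>\<omega>. f \<omega>^2 - 2 * c * f \<omega> + c^2 \<partial>M)"
    by (simp add: power2_diff algebra_simps)
  also have "\<dots> = (\<integral>\<omega>. f \<omega>^2 \<partial>M) - 2 * c * c + c^2"
    using assms unfolding c_def by (simp add: prob_space)
  finally show ?thesis unfolding c_def by (simp add: power2_eq_square)
qed

lemma meas_comp: "(\<lambda>\<omega>. x \<omega> $ i) \<in> borel_measurable M" if "x \<in> borel_measurable M" for x :: "'a \<Rightarrow> real^'n"
proof -
  have "(\<lambda>\<omega>. x \<omega> $ i) = (\<lambda>\<omega>. x \<omega> \<bullet> axis i 1)" by (simp add: inner_axis)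
  moreover have "(\<lambda>\<omega>. x \<omega> \<bullet> axis i 1) \<in> borel_measurable M" using that by measurable
  ultimately show ?thesis by simp
qed

lemma c4: "(a + b)^4 \<le> 8 * (a^4 + b^4)" for a b :: real
proof -
  have "(a + b)^2 \<le> 2 * (a^2 + b^2)" using zero_le_power2[of "a - b"] unfolding power2_diff power2_sum by (simp add: algebra_simps)
  hence "((a + b)^2)^2 \<le> (2 * (a^2 + b^2))^2" by (intro power_mono) auto
  also have "\<dots> \<le> 8 * (a^4 + b^4)" using zero_le_power2[of "a^2 - b^2"]
    unfolding power2_diff by (simp add: power2_eq_square algebra_simps eval_nat_numeral)
  finally show ?thesis by (simp add: eval_nat_numeral)
qed

lemma abs_le_sq: "\<bar>z\<bar> \<le> 1 + z^2" for z :: real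
proof (cases "\<bar>z\<bar> \<le> 1")
  case True then show ?thesis by (smt (verit) zero_le_power2)
next
  case False
  hence "\<bar>z\<bar> * 1 \<le> \<bar>z\<bar> * \<bar>z\<bar>" by (intro mult_left_mono) auto
  thus ?thesis by (simp add: power2_eq_square)
qed

lemma abs_prod_le: "\<bar>s * t\<bar> \<le> s^2 + t^2" for s t :: real
proof -
  have "2 * (\<bar>s\<bar> * \<bar>t\<bar>) \<le> s^2 + t^2" using zero_le_power2[of "\<bar>s\<bar> - \<bar>t\<bar>"] unfolding power2_diff by (simp add: mult.assoc)
  moreover have "0 \<le> \<bar>s\<bar> * \<bar>t\<bar>" by simp
  ultimately show ?thesis unfolding abs_mult by linarith
qed

lemma quad_shift: "v \<bullet> ((A - c *\<^sub>R mat 1) *v v) = v \<bullet> (A *v v) - c * (v \<bullet> v)"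
  for A :: "real^'n^'n" and v :: "real^'n"
  by (simp add: matrix_vector_mult_diff_rdistrib scaleR_matrix_vector_assoc[symmetric] inner_diff_right)

theorem lemma12:
  fixes M :: "'a measure" and x :: "'a \<Rightarrow> real^'n"
    and \<kappa> \<rho> \<delta> :: real and G :: "'a set"
  assumes "prob_space M"
    and "x \<in> borel_measurable M"
    and "\<kappa> > 0" and "\<rho> > 0"
    and tail: "\<forall>u::real. measure M {\<omega> \<in> space M. norm (x \<omega>) > u}
                 \<le> 2 * exp (- u\<^sup>2 / (2 * \<kappa>\<^sup>2))"
    and cov: "psd_ge (cov_mat M x) (\<rho> *\<^sub>R mat 1)"
    and "0 < \<delta>" and "\<delta> < 1/2"
    and "G \<in> sets M" and "measure M G \<le> \<delta>"
  shows "psd_ge (cond_cov_mat M (space M - G) x) ((\<rho> - 105 * \<kappa>\<^sup>2 * sqrt \<delta>) *\<^sub>R mat 1)"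
proof -
  interpret prob_space M by (rule assms(1))
  have xm: "x \<in> borel_measurable M" by (rule assms(2))
  have k0: "\<kappa> > 0" by (rule assms(3))
  have d0: "\<delta> > 0" by (rule assms(7))
  define N where "N \<omega> = norm (x \<omega>)" for \<omega>
  have Nm: "N \<in> borel_measurable M" unfolding N_def using xm by measurable
  have N0: "N \<omega> \<ge> 0" for \<omega> unfolding N_def by simp
  have FM: "integrable M (\<lambda>\<omega>. N \<omega> ^ 4) \<and> (\<integral>\<omega>. N \<omega> ^ 4 \<partial>M) \<le> 72 * \<kappa>^4"
    unfolding N_def by (rule fourth_moment[OF assms(1) _ _ k0 tail]) (use xm in auto)
  hence iN4: "integrable M (\<lambda>\<omega>. N \<omega> ^ 4)" and EN4: "(\<integral>\<omega>. N \<omega> ^ 4 \<partial>M) \<le> 72 * \<kappa>^4" by auto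
  have fmM: "finite_measure M" by unfold_locales
  have xim: "(\<lambda>\<omega>. x \<omega> $ i) \<in> borel_measurable M" for i using meas_comp[OF xm] .
  have csq: "\<exists>C. \<forall>\<omega>. (x \<omega> $ i - a)^2 \<le> C * (1 + N \<omega> ^ 4)" for i a
  proof -
    have bnd: "\<bar>x \<omega> $ i - a\<bar> \<le> 1 * N \<omega> + \<bar>a\<bar>" for \<omega>
      unfolding N_def using component_le_norm_cart[of "x \<omega>" i] by linarith
    show ?thesis using pow4_bound(2)[OF N0 zero_le_one abs_ge_zero bnd] by blast
  qed
  have ixi: "integrable M (\<lambda>\<omega>. x \<omega> $ i)" for i
  proof -
    obtain C where C: "\<And>\<omega>. (x \<omega> $ i - 0)^2 \<le> C * (1 + N \<omega> ^ 4)" using csq by blast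
    show ?thesis
    proof (rule int_dom[OF iN4 fmM xim])
      fix \<omega>
      have "\<bar>x \<omega> $ i\<bar> \<le> 1 + (x \<omega> $ i)^2" by (rule abs_le_sq)
      also have "\<dots> \<le> 1 + C * (1 + N \<omega> ^ 4)" using C[of \<omega>] by simp
      also have "\<dots> \<le> (1 + C) * (1 + N \<omega> ^ 4)" using N0[of \<omega>] by (simp add: algebra_simps)
      finally show "\<bar>x \<omega> $ i\<bar> \<le> (1 + C) * (1 + N \<omega> ^ 4)" .
    qed
  qed
  have iprod: "integrable M (\<lambda>\<omega>. (x \<omega> $ i - a) * (x \<omega> $ j - b))" for i j a b
  proof -
    obtain C1 where C1: "\<And>\<omega>. (x \<omega> $ i - a)^2 \<le> C1 * (1 + N \<omega> ^ 4)" using csq by blast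
    obtain C2 where C2: "\<And>\<omega>. (x \<omega> $ j - b)^2 \<le> C2 * (1 + N \<omega> ^ 4)" using csq by blast
    show ?thesis
    proof (rule int_dom[OF iN4 fmM])
      show "(\<lambda>\<omega>. (x \<omega> $ i - a) * (x \<omega> $ j - b)) \<in> borel_measurable M" using xim by measurable
      fix \<omega>
      have "\<bar>(x \<omega> $ i - a) * (x \<omega> $ j - b)\<bar> \<le> (x \<omega> $ i - a)^2 + (x \<omega> $ j - b)^2"
        by (rule abs_prod_le)
      also have "\<dots> \<le> (C1 + C2) * (1 + N \<omega> ^ 4)" using C1[of \<omega>] C2[of \<omega>] by (simp add: algebra_simps)
      finally show "\<bar>(x \<omega> $ i - a) * (x \<omega> $ j - b)\<bar> \<le> (C1 + C2) * (1 + N \<omega> ^ 4)" .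
    qed
  qed
  define A where "A = space M - G"
  have As: "A \<in> sets M" unfolding A_def using assms(9) by auto
  define p where "p = measure M A"
  have pA: "p = 1 - measure M G" unfolding p_def A_def using prob_compl[OF assms(9)] .
  have pq: "1 - measure M A \<le> measure M A" using pA assms(8) assms(10) unfolding p_def by linarith
  have pd: "1 - measure M A \<le> \<delta>" using pA assms(10) unfolding p_def by linarith
  have p0: "p > 0" using pq unfolding p_def by linarith
  show ?thesis
    unfolding psd_ge_def A_def[symmetric]
  proof
    fix v :: "real^'n"
    show "0 \<le> v \<bullet> ((cond_cov_mat M A x - (\<rho> - 105 * \<kappa>\<^sup>2 * sqrt \<delta>) *\<^sub>R mat 1) *v v)"
    proof (cases "v = 0")
      case True then show ?thesis by simp
    next
      case False
      define y where "y \<omega> = v \<bullet> x \<omega>" for \<omega>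
      have ym: "y \<in> borel_measurable M" unfolding y_def using xm by measurable
      have yabs: "\<bar>y \<omega>\<bar> \<le> norm v * N \<omega> + 0" for \<omega>
        unfolding y_def N_def using Cauchy_Schwarz_ineq2 by simp
      have iy: "integrable M y"
      proof (rule int_dom[OF iN4 fmM ym])
        fix \<omega>
        have "\<bar>y \<omega>\<bar> \<le> 1 + (y \<omega>)^2" by (rule abs_le_sq)
        also have "\<dots> \<le> 1 + (1 + 8 * (norm v ^ 4 + 0^4)) * (1 + N \<omega> ^ 4)"
          using pow4_bound(2)[OF N0 norm_ge_zero _ yabs] by simp
        also have "\<dots> \<le> (2 + 8 * (norm v ^ 4 + 0^4)) * (1 + N \<omega> ^ 4)" using N0[of \<omega>] by (simp add: algebra_simps)
        finally show "\<bar>y \<omega>\<bar> \<le> (2 + 8 * (norm v ^ 4 + 0^4)) * (1 + N \<omega> ^ 4)" .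
      qed
      have iy2: "integrable M (\<lambda>\<omega>. y \<omega>^2)"
        by (rule int_dom[OF iN4 fmM]) (use ym pow4_bound(2)[OF N0 norm_ge_zero _ yabs] in auto)
      have iy4: "integrable M (\<lambda>\<omega>. y \<omega>^4)"
        by (rule int_dom[OF iN4 fmM]) (use ym pow4_bound(1)[OF N0 norm_ge_zero _ yabs] in auto)
      define \<mu> where "\<mu> = (\<integral>\<omega>. y \<omega> \<partial>M)"
      have uabs: "\<bar>y \<omega> - \<mu>\<bar> \<le> norm v * N \<omega> + \<bar>\<mu>\<bar>" for \<omega> using yabs[of \<omega>] by linarith
      have iu2: "integrable M (\<lambda>\<omega>. (y \<omega> - \<mu>)^2)"
        by (rule int_dom[OF iN4 fmM]) (use ym pow4_bound(2)[OF N0 norm_ge_zero abs_ge_zero uabs] in auto)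
      have iu4: "integrable M (\<lambda>\<omega>. (y \<omega> - \<mu>)^4)"
        by (rule int_dom[OF iN4 fmM]) (use ym pow4_bound(1)[OF N0 norm_ge_zero abs_ge_zero uabs] in auto)
      define K where "K = 34 * (v \<bullet> v) * \<kappa>^2"
      have vv: "v \<bullet> v = norm v ^ 2" by (simp add: power2_norm_eq_inner)
      have K0: "K > 0" unfolding K_def using False k0 by simp
      have Ey4: "(\<integral>\<omega>. y \<omega>^4 \<partial>M) \<le> norm v ^ 4 * (72 * \<kappa>^4)"
      proof -
        have "(\<integral>\<omega>. y \<omega>^4 \<partial>M) \<le> (\<integral>\<omega>. norm v ^ 4 * N \<omega> ^ 4 \<partial>M)"
        proof (rule integral_mono[OF iy4])
          show "integrable M (\<lambda>\<omega>. norm v ^ 4 * N \<omega> ^ 4)" using iN4 by simp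
          fix \<omega>
          have "y \<omega>^4 = \<bar>y \<omega>\<bar>^4" by (simp add: power_abs[symmetric] eval_nat_numeral)
          also have "\<dots> \<le> (norm v * N \<omega>)^4" using yabs[of \<omega>] by (intro power_mono) auto
          finally show "y \<omega>^4 \<le> norm v ^ 4 * N \<omega> ^ 4" by (simp add: power_mult_distrib)
        qed
        also have "\<dots> = norm v ^ 4 * (\<integral>\<omega>. N \<omega> ^ 4 \<partial>M)" by simp
        also have "\<dots> \<le> norm v ^ 4 * (72 * \<kappa>^4)" using EN4 by (intro mult_left_mono) auto
        finally show ?thesis .
      qed
      have mu4: "\<mu>^4 \<le> (\<integral>\<omega>. y \<omega>^4 \<partial>M)"
      proof -
        have "\<mu>^2 \<le> (\<integral>\<omega>. y \<omega>^2 \<partial>M)" unfolding \<mu>_def by (rule jensen_sq[OF assms(1) iy iy2])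
        hence "(\<mu>^2)^2 \<le> (\<integral>\<omega>. y \<omega>^2 \<partial>M)^2" by (intro power_mono) auto
        also have "\<dots> \<le> (\<integral>\<omega>. (y \<omega>^2)^2 \<partial>M)"
          by (rule jensen_sq[OF assms(1) iy2]) (use iy4 in \<open>simp add: power_mult[symmetric]\<close>)
        finally show ?thesis by (simp add: power_mult[symmetric])
      qed
      have Kb: "(\<integral>\<omega>. (y \<omega> - \<mu>)^4 \<partial>M) \<le> K^2"
      proof -
        have "(\<integral>\<omega>. (y \<omega> - \<mu>)^4 \<partial>M) \<le> (\<integral>\<omega>. 8 * (y \<omega>^4 + \<mu>^4) \<partial>M)"
        proof (rule integral_mono[OF iu4])
          show "integrable M (\<lambda>\<omega>. 8 * (y \<omega>^4 + \<mu>^4))" using iy4 by simp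
          fix \<omega>
          show "(y \<omega> - \<mu>)^4 \<le> 8 * (y \<omega>^4 + \<mu>^4)" using c4[of "y \<omega>" "- \<mu>"] by simp
        qed
        also have "\<dots> = 8 * (\<integral>\<omega>. y \<omega>^4 \<partial>M) + 8 * \<mu>^4" using iy4 by (simp add: prob_space)
        also have "\<dots> \<le> 16 * (norm v ^ 4 * (72 * \<kappa>^4))" using mu4 Ey4 by linarith
        also have "\<dots> \<le> K^2"
        proof -
          have e: "K^2 = 1156 * (norm v ^ 4 * \<kappa>^4)" unfolding K_def vv
            by (simp add: power_mult_distrib power_mult[symmetric])
          have "0 \<le> norm v ^ 4 * \<kappa>^4" by simp
          then show ?thesis using e by linarith
        qed
        finally show ?thesis .
      qed
      have SC: "(\<integral>\<omega>. indicator A \<omega> * (y \<omega> - (\<integral>\<omega>. indicator A \<omega> * y \<omega> \<partial>M) / measure M A)^2 \<partial>M) / measure M A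
           \<ge> (\<integral>\<omega>. (y \<omega> - (\<integral>\<omega>. y \<omega> \<partial>M))^2 \<partial>M) - 2 * K * sqrt \<delta>"
        by (rule scalar[OF assms(1) As iy _ _ pq pd d0 K0]) (use iu2 iu4 Kb in \<open>simp_all add: \<mu>_def\<close>)
      define m where "m = mean_vec M x"
      define cm where "cm = cond_mean_vec M A x"
      have vm: "v \<bullet> m = \<mu>"
      proof -
        have "v \<bullet> m = (\<Sum>i\<in>UNIV. v $ i * (\<integral>\<omega>. x \<omega> $ i \<partial>M))"
          unfolding m_def mean_vec_def by (simp add: inner_vec_def)
        also have "\<dots> = (\<integral>\<omega>. (\<Sum>i\<in>UNIV. v $ i * x \<omega> $ i) \<partial>M)"
          using ixi by (simp add: integral_sum)
        also have "\<dots> = \<mu>" unfolding \<mu>_def y_def by (simp add: inner_vec_def)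
        finally show ?thesis .
      qed
      have vcm: "v \<bullet> cm = (\<integral>\<omega>. indicator A \<omega> * y \<omega> \<partial>M) / measure M A"
      proof -
        have ii: "integrable M (\<lambda>\<omega>. v $ i * (indicator A \<omega> * x \<omega> $ i))" for i
          using integrable_mult_indicator[OF As ixi[of i]] by simp
        have "v \<bullet> cm = (\<Sum>i\<in>UNIV. v $ i * (\<integral>\<omega>. indicator A \<omega> * x \<omega> $ i \<partial>M)) / measure M A"
          unfolding cm_def cond_mean_vec_def by (simp add: inner_vec_def sum_divide_distrib)
        also have "(\<Sum>i\<in>UNIV. v $ i * (\<integral>\<omega>. indicator A \<omega> * x \<omega> $ i \<partial>M)) = (\<integral>\<omega>. (\<Sum>i\<in>UNIV. v $ i * (indicator A \<omega> * x \<omega> $ i)) \<partial>M)"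
          using ii by (simp add: integral_sum)
        also have "\<dots> = (\<integral>\<omega>. indicator A \<omega> * y \<omega> \<partial>M)" unfolding y_def
          by (simp add: inner_vec_def sum_distrib_left algebra_simps)
        finally show ?thesis .
      qed
      have covq: "v \<bullet> (cov_mat M x *v v) = (\<integral>\<omega>. (y \<omega> - \<mu>)^2 \<partial>M)"
      proof -
        have "cov_mat M x = (\<chi> i j. (\<integral>\<omega>. (\<lambda>_. 1::real) \<omega> * ((x \<omega> $ i - m $ i) * (x \<omega> $ j - m $ j)) \<partial>M) / 1)"
          unfolding cov_mat_def m_def Let_def by simp
        hence "v \<bullet> (cov_mat M x *v v) = (\<integral>\<omega>. (\<lambda>_. 1::real) \<omega> * (v \<bullet> (x \<omega> - m))^2 \<partial>M) / 1"
          using quad[where h="\<lambda>_. 1" and x=x and m=m and M=M and v=v and p=1] iprod by simp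
        also have "\<dots> = (\<integral>\<omega>. (y \<omega> - \<mu>)^2 \<partial>M)" using vm unfolding y_def by (simp add: inner_diff_right)
        finally show ?thesis .
      qed
      have ccq: "v \<bullet> (cond_cov_mat M A x *v v) =
          (\<integral>\<omega>. indicator A \<omega> * (y \<omega> - (\<integral>\<omega>. indicator A \<omega> * y \<omega> \<partial>M) / measure M A)^2 \<partial>M) / measure M A"
      proof -
        have ii: "integrable M (\<lambda>\<omega>. indicator A \<omega> * ((x \<omega> $ i - cm $ i) * (x \<omega> $ j - cm $ j)))" for i j
          using integrable_mult_indicator[OF As iprod[of i "cm $ i" j "cm $ j"]] by simp
        have "cond_cov_mat M A x = (\<chi> i j. (\<integral>\<omega>. indicator A \<omega> * ((x \<omega> $ i - cm $ i) * (x \<omega> $ j - cm $ j)) \<partial>M) / measure M A)"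
          unfolding cond_cov_mat_def cm_def Let_def by simp
        hence "v \<bullet> (cond_cov_mat M A x *v v) = (\<integral>\<omega>. indicator A \<omega> * (v \<bullet> (x \<omega> - cm))^2 \<partial>M) / measure M A"
          using quad[where h="indicator A" and x=x and m=cm and M=M and v=v and p="measure M A"] ii by simp
        also have "\<dots> = (\<integral>\<omega>. indicator A \<omega> * (y \<omega> - (\<integral>\<omega>. indicator A \<omega> * y \<omega> \<partial>M) / measure M A)^2 \<partial>M) / measure M A"
          using vcm unfolding y_def by (simp add: inner_diff_right)
        finally show ?thesis .
      qed
      have cov1: "0 \<le> v \<bullet> (cov_mat M x *v v) - \<rho> * (v \<bullet> v)"
        using cov unfolding psd_ge_def quad_shift by blast
      have "0 \<le> 37 * (v \<bullet> v) * \<kappa>^2 * sqrt \<delta>" using d0 by simp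
      moreover have "v \<bullet> (cond_cov_mat M A x *v v) \<ge> (\<integral>\<omega>. (y \<omega> - \<mu>)^2 \<partial>M) - 2 * K * sqrt \<delta>"
        using SC ccq unfolding \<mu>_def by simp
      ultimately show ?thesis
        unfolding quad_shift using cov1 covq unfolding K_def by (simp add: algebra_simps)
    qed
  qed
qed

end
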